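(* Let $\mathbf A\in\mathbb R^{m\times n}$ with $0<m<n$ and suppose there is $\Delta>0$ such that $\|\mathbf h\|_1\ge\sqrt{m/\Delta}\,\|\mathbf h\|_2$ for all nonzero $\mathbf h\in\mathrm{Null}(\mathbf A)$. Let $\mathbf x^0\in\mathbb R^n$ be arbitrary, $\mathcal S$ the set of indices of its $k$ largest components in magnitude, $\mathcal Z=\{1,\dots,n\}\setminus\mathcal S$, and let $\alpha>\|\mathbf x^0_{\mathcal Z}\|_\infty$. Define $C_3:=\frac{\alpha+\|\mathbf x^0_{\mathcal S}\|_\infty}{\alpha-\|\mathbf x^0_{\mathcal Z}\|_\infty}$ and $C_4:=\frac{2\alpha}{\alpha-\|\mathbf x^0_{\mathcal Z}\|_\infty}$. If $m\ge 4(1+C_3)^2k\Delta$, then the solution $\mathbf x^*$ of problem (P2) with $\mathbf b=\mathbf A\mathbf x^0$ satisfies $$\|\mathbf x^*-\mathbf x^0\|_1\le 4C_4\|\mathbf x^0_{\mathcal Z}\|_1.$$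
   Context: Problem (P2) is $\min_{\mathbf x}\{\|\mathbf x\|_1+\frac{1}{2\alpha}\|\mathbf x\|_2^2:\ \mathbf A\mathbf x=\mathbf b\}$. $\mathbf x_{\mathcal S}$ is the restriction of $\mathbf x$ to coordinates in $\mathcal S$. *)

theory Defs
  imports "HOL-Analysis.Analysis"
begin

definition l1norm :: "real ^ 'n \<Rightarrow> real" where
  "l1norm x = (\<Sum>i\<in>UNIV. \<bar>x $ i\<bar>)"

definition l1norm_on :: "'n set \<Rightarrow> real ^ 'n \<Rightarrow> real" where
  "l1norm_on S x = (\<Sum>i\<in>S. \<bar>x $ i\<bar>)"

definition linf_on :: "'n set \<Rightarrow> real ^ 'n \<Rightarrow> real" where
  "linf_on S x = (if S = {} then 0 else Max ((\<lambda>i. \<bar>x $ i\<bar>) ` S))"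

definition P2_obj :: "real \<Rightarrow> real ^ 'n \<Rightarrow> real" where
  "P2_obj \<alpha> x = l1norm x + (1 / (2 * \<alpha>)) * (norm x)\<^sup>2"

definition P2_solution :: "real ^ 'n ^ 'm \<Rightarrow> real ^ 'm \<Rightarrow> real \<Rightarrow> real ^ 'n \<Rightarrow> bool" where
  "P2_solution A b \<alpha> x \<longleftrightarrow> A *v x = b \<and> (\<forall>y. A *v y = b \<longrightarrow> P2_obj \<alpha> x \<le> P2_obj \<alpha> y)"

end

theory Submission
  imports Defs
begin

lemma linf_on_ge: "finite S \<Longrightarrow> i \<in> S \<Longrightarrow> \<bar>x $ i\<bar> \<le> linf_on S x"
  unfolding linf_on_def by auto

lemma linf_on_nonneg: "finite S \<Longrightarrow> linf_on S x \<ge> 0"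
  unfolding linf_on_def
  by (cases "S = {}") (auto intro: order.trans[OF abs_ge_zero Max_ge])

lemma norm_sq_vec: "(norm (x :: real ^ 'n))\<^sup>2 = (\<Sum>i\<in>UNIV. (x $ i)\<^sup>2)"
  unfolding power2_norm_eq_inner inner_vec_def by (simp add: power2_eq_square)

lemma coordS:
  fixes a y x0 aS :: real
  assumes "a > 0" "\<bar>x0\<bar> \<le> aS"
  shows "\<bar>y\<bar> + y\<^sup>2/(2*a) - \<bar>x0\<bar> - x0\<^sup>2/(2*a) \<ge> -(1 + aS/a) * \<bar>y - x0\<bar>"
proof -
  have "y\<^sup>2 - x0\<^sup>2 = 2*x0*(y-x0) + (y-x0)\<^sup>2" by (simp add: power2_eq_square algebra_simps)
  moreover have "2*x0*(y-x0) \<ge> -2*aS*\<bar>y-x0\<bar>"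
  proof -
    have "\<bar>x0*(y-x0)\<bar> \<le> aS*\<bar>y-x0\<bar>" using assms(2) by (simp add: abs_mult mult_right_mono)
    thus ?thesis by linarith
  qed
  ultimately have "y\<^sup>2 - x0\<^sup>2 \<ge> -2*aS*\<bar>y-x0\<bar>" by (smt (verit) zero_le_power2)
  hence "(y\<^sup>2 - x0\<^sup>2)/(2*a) \<ge> -(aS/a)*\<bar>y-x0\<bar>" using assms(1) by (simp add: field_simps)
  moreover have "\<bar>y\<bar> - \<bar>x0\<bar> \<ge> -\<bar>y - x0\<bar>" by linarith
  ultimately show ?thesis by (simp add: diff_divide_distrib algebra_simps)
qed

lemma coordZ:
  fixes a y x0 aZ :: real
  assumes "a > 0" "\<bar>x0\<bar> \<le> aZ"
  shows "\<bar>y\<bar> + y\<^sup>2/(2*a) - \<bar>x0\<bar> - x0\<^sup>2/(2*a) \<ge> (1 - aZ/a) * \<bar>y - x0\<bar> - 2*\<bar>x0\<bar>"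
proof -
  have "y\<^sup>2 - x0\<^sup>2 = 2*x0*(y-x0) + (y-x0)\<^sup>2" by (simp add: power2_eq_square algebra_simps)
  moreover have "2*x0*(y-x0) \<ge> -2*aZ*\<bar>y-x0\<bar>"
  proof -
    have "\<bar>x0*(y-x0)\<bar> \<le> aZ*\<bar>y-x0\<bar>" using assms(2) by (simp add: abs_mult mult_right_mono)
    thus ?thesis by linarith
  qed
  ultimately have "y\<^sup>2 - x0\<^sup>2 \<ge> -2*aZ*\<bar>y-x0\<bar>" by (smt (verit) zero_le_power2)
  hence "(y\<^sup>2 - x0\<^sup>2)/(2*a) \<ge> -(aZ/a)*\<bar>y-x0\<bar>" using assms(1) by (simp add: field_simps)
  moreover have "\<bar>y\<bar> - \<bar>x0\<bar> \<ge> \<bar>y - x0\<bar> - 2*\<bar>x0\<bar>" by linarith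
  ultimately show ?thesis by (simp add: diff_divide_distrib algebra_simps)
qed

theorem mainTheorem6:
  fixes A :: "real ^ 'n ^ 'm" and \<Delta> \<alpha> :: real and x0 xs :: "real ^ 'n"
    and k :: nat and S :: "'n set"
  assumes mn: "CARD('m) < CARD('n)"
    and Delta_pos: "\<Delta> > 0"
    and nsp: "\<And>h. A *v h = 0 \<Longrightarrow> h \<noteq> 0 \<Longrightarrow>
               l1norm h \<ge> sqrt (real CARD('m) / \<Delta>) * norm h"
    and S_card: "card S = k"
    and S_largest: "\<And>i j. i \<in> S \<Longrightarrow> j \<notin> S \<Longrightarrow> \<bar>x0 $ i\<bar> \<ge> \<bar>x0 $ j\<bar>"
    and alpha: "\<alpha> > linf_on (- S) x0"
    and m_bound: "real CARD('m) \<ge>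
       4 * (1 + (\<alpha> + linf_on S x0) / (\<alpha> - linf_on (- S) x0))\<^sup>2 * real k * \<Delta>"
    and sol: "P2_solution A (A *v x0) \<alpha> xs"
  shows "l1norm (xs - x0) \<le> 4 * (2 * \<alpha> / (\<alpha> - linf_on (- S) x0)) * l1norm_on (- S) x0"
proof -
  define aS where "aS = linf_on S x0"
  define aZ where "aZ = linf_on (- S) x0"
  define h where "h = xs - x0"
  define HS where "HS = (\<Sum>i\<in>S. \<bar>h $ i\<bar>)"
  define HZ where "HZ = (\<Sum>i\<in>-S. \<bar>h $ i\<bar>)"
  define XZ where "XZ = l1norm_on (- S) x0"
  define D where "D = \<alpha> - aZ"
  define C3 where "C3 = (\<alpha> + aS) / D"
  define C4 where "C4 = 2 * \<alpha> / D"
  have finS: "finite S" by simp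
  have finZ: "finite (-S)" by simp
  have aZ0: "aZ \<ge> 0" unfolding aZ_def using linf_on_nonneg[OF finZ] .
  have aS0: "aS \<ge> 0" unfolding aS_def using linf_on_nonneg[OF finS] .
  have D0: "D > 0" using alpha unfolding D_def aZ_def by simp
  have a0: "\<alpha> > 0" using D0 aZ0 unfolding D_def by simp
  have C30: "C3 \<ge> 0" unfolding C3_def using D0 a0 aS0 by simp
  have XZ0: "XZ \<ge> 0" unfolding XZ_def l1norm_on_def by (simp add: sum_nonneg)
  have H: "l1norm h = HS + HZ"
    unfolding l1norm_def HS_def HZ_def using sum.union_disjoint[of S "-S" "\<lambda>i. \<bar>h $ i\<bar>"]
    by (simp add: Compl_partition)
  have Ah: "A *v h = 0" using sol unfolding P2_solution_def h_def
    by (simp add: matrix_vector_mult_diff_distrib)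
  define g where "g i = \<bar>xs$i\<bar> + (xs$i)\<^sup>2/(2*\<alpha>) - \<bar>x0$i\<bar> - (x0$i)\<^sup>2/(2*\<alpha>)" for i
  have "P2_obj \<alpha> xs \<le> P2_obj \<alpha> x0" using sol unfolding P2_solution_def by simp
  hence sumg: "(\<Sum>i\<in>UNIV. g i) \<le> 0"
    unfolding P2_obj_def l1norm_def norm_sq_vec g_def
    by (simp add: sum_subtractf sum.distrib sum_distrib_left sum_divide_distrib)
  have "(\<Sum>i\<in>UNIV. g i) = (\<Sum>i\<in>S. g i) + (\<Sum>i\<in>-S. g i)"
    using sum.union_disjoint[of S "-S" g] by (simp add: Compl_partition)
  moreover have "(\<Sum>i\<in>S. g i) \<ge> (\<Sum>i\<in>S. -(1 + aS/\<alpha>) * \<bar>h$i\<bar>)"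
    apply (rule sum_mono) unfolding g_def h_def
    using coordS[OF a0 linf_on_ge[OF finS]] aS_def by simp
  moreover have "(\<Sum>i\<in>-S. g i) \<ge> (\<Sum>i\<in>-S. (1 - aZ/\<alpha>) * \<bar>h$i\<bar> - 2*\<bar>x0$i\<bar>)"
    apply (rule sum_mono) unfolding g_def h_def
    using coordZ[OF a0 linf_on_ge[OF finZ]] aZ_def by simp
  ultimately have "-(1 + aS/\<alpha>) * HS + ((1 - aZ/\<alpha>) * HZ - 2 * XZ) \<le> 0"
    using sumg unfolding HS_def HZ_def XZ_def l1norm_on_def
    by (simp add: sum_distrib_left sum_subtractf)
  hence "\<alpha> * (-(1 + aS/\<alpha>) * HS + ((1 - aZ/\<alpha>) * HZ - 2 * XZ)) \<le> 0"
    using a0 by (simp add: mult_nonneg_nonpos)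
  hence "D * HZ \<le> (\<alpha> + aS) * HS + 2*\<alpha>*XZ" using a0 unfolding D_def
    by (simp add: algebra_simps)
  hence "HZ \<le> ((\<alpha> + aS) * HS + 2*\<alpha>*XZ) / D" using D0 by (simp add: pos_le_divide_eq mult.commute)
  moreover have "((\<alpha> + aS) * HS + 2*\<alpha>*XZ) / D = C3 * HS + C4 * XZ"
    unfolding C3_def C4_def by (simp add: add_divide_distrib algebra_simps)
  ultimately have HZb: "HZ \<le> C3 * HS + C4 * XZ" by simp
  have key: "2 * (1 + C3) * HS \<le> l1norm h"
  proof (cases "h = 0")
    case True thus ?thesis unfolding HS_def l1norm_def by simp
  next
    case False
    have nh: "l1norm h \<ge> sqrt (real CARD('m) / \<Delta>) * norm h" using nsp[OF Ah False] .
    have "HS\<^sup>2 \<le> (\<Sum>i\<in>S. (\<bar>h$i\<bar>)\<^sup>2) * card S"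
      unfolding HS_def by (rule sum_squared_le_sum_of_squares)
    also have "(\<Sum>i\<in>S. (\<bar>h$i\<bar>)\<^sup>2) \<le> (\<Sum>i\<in>UNIV. (h$i)\<^sup>2)"
      by (simp add: sum_mono2)
    hence "(\<Sum>i\<in>S. (\<bar>h$i\<bar>)\<^sup>2) * card S \<le> (norm h)\<^sup>2 * k"
      using S_card norm_sq_vec[of h] by (simp add: mult_right_mono)
    finally have hs2: "HS\<^sup>2 \<le> (norm h)\<^sup>2 * k" .
    have HS0: "HS \<ge> 0" unfolding HS_def by (simp add: sum_nonneg)
    have "HS \<le> sqrt k * norm h"
      using real_sqrt_le_mono[OF hs2] HS0 by (simp add: real_sqrt_mult mult.commute)
    hence "2 * (1 + C3) * HS \<le> 2 * (1 + C3) * sqrt k * norm h"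
      using C30 by (simp add: mult_left_mono)
    also have "2 * (1 + C3) * sqrt k = sqrt (4 * (1 + C3)\<^sup>2 * k * \<Delta> / \<Delta>)"
      using C30 Delta_pos by (simp add: real_sqrt_mult)
    also have "\<dots> \<le> sqrt (real CARD('m) / \<Delta>)"
      using m_bound Delta_pos unfolding C3_def D_def aS_def aZ_def
      by (intro real_sqrt_le_mono divide_right_mono) auto
    finally have "2 * (1 + C3) * HS \<le> sqrt (real CARD('m) / \<Delta>) * norm h"
      by (simp add: mult_right_mono)
    thus ?thesis using nh by linarith
  qed
  have "l1norm h \<le> 2 * C4 * XZ" using key H HZb by (simp add: algebra_simps)
  also have "\<dots> \<le> 4 * C4 * XZ" proof -
    have "C4 \<ge> 0" unfolding C4_def using D0 a0 by simp
    thus ?thesis using XZ0 by (simp add: mult_right_mono mult_nonneg_nonneg)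
  qed
  finally show ?thesis unfolding h_def C4_def D_def aZ_def XZ_def .
qed

end
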